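(* Let $M$ be a $\mathscr{D}(R,V)$-module. Set $I=\mathrm{Ann}_R(M)$ and $J = (I:\pi^{\infty}) := \{a\in R\mid a\pi^m\in I \text{ for some integer } m \geq 0\}$. Then $J$ is a $\mathscr{D}(R,V)$-submodule of $R$.
   Context: Let $(V, \pi V, k)$ be a DVR of mixed characteristic $(0,p)$ (i.e. $V$ has characteristic zero, maximal ideal generated by $\pi$, and residue field $k$ of characteristic $p>0$), and let $R$ be either $V[[x_1, \ldots, x_n]]$ or $V[x_1, \ldots, x_n]$ for some $n \geq 0$. $\mathscr{D}(R,V)$ denotes the ring of $V$-linear differential operators on $R$, and $\mathscr{D}(R,V)$-modules are left modules over it. *)

theory Defs
  imports "HOL-Library.Multiset" "HOL-Library.FuncSet"
begin

definition dvr_uniformizer :: "'a::idom \<Rightarrow> bool" where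
  "dvr_uniformizer pi \<longleftrightarrow> pi \<noteq> 0 \<and> \<not> pi dvd 1 \<and>
     (\<forall>a. a \<noteq> 0 \<longrightarrow> (\<exists>u k. u dvd 1 \<and> a = u * pi ^ k))"

definition residue_char :: "'a::idom \<Rightarrow> nat \<Rightarrow> bool" where
  "residue_char pi p \<longleftrightarrow> p > 0 \<and> pi dvd of_nat p \<and>
     (\<forall>q. 0 < q \<and> q < p \<longrightarrow> \<not> pi dvd of_nat q)"

text \<open>Elements are coefficient functions on monomials; a monomial is a multiset of
variable indices.\<close>
type_synonym 'a series = "nat multiset \<Rightarrow> 'a"

definition R_ps :: "nat \<Rightarrow> 'a::comm_ring_1 series set" where
  "R_ps n = {f. \<forall>m. f m \<noteq> 0 \<longrightarrow> set_mset m \<subseteq> {..<n}}"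

definition R_poly :: "nat \<Rightarrow> 'a::comm_ring_1 series set" where
  "R_poly n = {f \<in> R_ps n. finite {m. f m \<noteq> 0}}"

definition s_add :: "'a::comm_ring_1 series \<Rightarrow> 'a series \<Rightarrow> 'a series" where
  "s_add f g = (\<lambda>m. f m + g m)"

definition s_mult :: "'a::comm_ring_1 series \<Rightarrow> 'a series \<Rightarrow> 'a series" where
  "s_mult f g = (\<lambda>m. \<Sum>a\<in>{a. a \<subseteq># m}. f a * g (m - a))"

definition s_const :: "'a::comm_ring_1 \<Rightarrow> 'a series" where
  "s_const c = (\<lambda>m. if m = {#} then c else 0)"

definition V_linear :: "'a::comm_ring_1 series set \<Rightarrow> ('a series \<Rightarrow> 'a series) \<Rightarrow> bool" where
  "V_linear R d \<longleftrightarrow> (\<forall>f\<in>R. d f \<in> R) \<and>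
     (\<forall>f\<in>R. \<forall>g\<in>R. d (s_add f g) = s_add (d f) (d g)) \<and>
     (\<forall>c. \<forall>f\<in>R. d (s_mult (s_const c) f) = s_mult (s_const c) (d f))"

fun diffop :: "'a::comm_ring_1 series set \<Rightarrow> nat \<Rightarrow> ('a series \<Rightarrow> 'a series) \<Rightarrow> bool" where
  "diffop R 0 d \<longleftrightarrow> (\<exists>a\<in>R. \<forall>f\<in>R. d f = s_mult a f)"
| "diffop R (Suc k) d \<longleftrightarrow> V_linear R d \<and>
     (\<forall>r\<in>R. diffop R k (\<lambda>f. s_add (d (s_mult r f)) (\<lambda>m. - (s_mult r (d f)) m)))"

definition Dring :: "'a::comm_ring_1 series set \<Rightarrow> ('a series \<Rightarrow> 'a series) set" where
  "Dring R = {d. d \<in> extensional R \<and> (\<exists>k. diffop R k d)}"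

definition D_add :: "'a::comm_ring_1 series set \<Rightarrow> ('a series \<Rightarrow> 'a series) \<Rightarrow> ('a series \<Rightarrow> 'a series) \<Rightarrow> ('a series \<Rightarrow> 'a series)" where
  "D_add R d e = (\<lambda>f\<in>R. s_add (d f) (e f))"

definition D_mult :: "'a::comm_ring_1 series set \<Rightarrow> ('a series \<Rightarrow> 'a series) \<Rightarrow> ('a series \<Rightarrow> 'a series) \<Rightarrow> ('a series \<Rightarrow> 'a series)" where
  "D_mult R d e = compose R d e"

definition D_one :: "'a::comm_ring_1 series set \<Rightarrow> ('a series \<Rightarrow> 'a series)" where
  "D_one R = (\<lambda>f\<in>R. f)"

definition mult_op :: "'a::comm_ring_1 series set \<Rightarrow> 'a series \<Rightarrow> ('a series \<Rightarrow> 'a series)" where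
  "mult_op R r = (\<lambda>f\<in>R. s_mult r f)"

definition D_module :: "'a::comm_ring_1 series set \<Rightarrow> (('a series \<Rightarrow> 'a series) \<Rightarrow> 'm::ab_group_add \<Rightarrow> 'm) \<Rightarrow> bool" where
  "D_module R act \<longleftrightarrow>
     (\<forall>d\<in>Dring R. \<forall>x y. act d (x + y) = act d x + act d y) \<and>
     (\<forall>d\<in>Dring R. \<forall>e\<in>Dring R. \<forall>x. act (D_add R d e) x = act d x + act e x) \<and>
     (\<forall>d\<in>Dring R. \<forall>e\<in>Dring R. \<forall>x. act (D_mult R d e) x = act d (act e x)) \<and>
     (\<forall>x. act (D_one R) x = x)"

definition Ann_R :: "'a::comm_ring_1 series set \<Rightarrow> (('a series \<Rightarrow> 'a series) \<Rightarrow> 'm::ab_group_add \<Rightarrow> 'm) \<Rightarrow> 'a series set" where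
  "Ann_R R act = {r\<in>R. \<forall>x. act (mult_op R r) x = 0}"

definition saturation :: "'a::comm_ring_1 series set \<Rightarrow> 'a series set \<Rightarrow> 'a \<Rightarrow> 'a series set" where
  "saturation R I pi = {a\<in>R. \<exists>m::nat. s_mult a (s_const (pi ^ m)) \<in> I}"

definition D_submodule :: "'a::comm_ring_1 series set \<Rightarrow> 'a series set \<Rightarrow> bool" where
  "D_submodule R J \<longleftrightarrow> J \<subseteq> R \<and> s_const 0 \<in> J \<and>
     (\<forall>a\<in>J. \<forall>b\<in>J. s_add a b \<in> J) \<and> (\<forall>a\<in>J. (\<lambda>m. - a m) \<in> J) \<and>
     (\<forall>d\<in>Dring R. \<forall>a\<in>J. d a \<in> J)"

end

theory Submission
  imports Defs "HOL-Library.Function_Algebras"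
begin

lemma finite_submsets: "finite {a. a \<subseteq># (m::'b multiset)}"
proof -
  have "{a. a \<subseteq># m} \<subseteq> mset ` {xs. set xs \<subseteq> set_mset m \<and> length xs \<le> size m}"
  proof
    fix a assume "a \<in> {a. a \<subseteq># m}"
    hence a: "a \<subseteq># m" by simp
    obtain xs where "mset xs = a" by (metis ex_mset)
    moreover have "set xs \<subseteq> set_mset m" using a \<open>mset xs = a\<close>
      by (metis mset_subset_eqD set_mset_mset subsetI)
    moreover have "length xs \<le> size m" using a \<open>mset xs = a\<close>
      by (metis size_mset size_mset_mono)
    ultimately show "a \<in> mset ` {xs. set xs \<subseteq> set_mset m \<and> length xs \<le> size m}" by blast
  qed
  moreover have "finite {xs. set xs \<subseteq> set_mset m \<and> length xs \<le> size m}"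
    using finite_lists_length_le[of "set_mset m" "size m"] by simp
  ultimately show ?thesis by (meson finite_imageI finite_subset)
qed

definition pairs :: "'b multiset \<Rightarrow> ('b multiset \<times> 'b multiset) set" where
  "pairs m = {p. fst p + snd p = m}"

lemma finite_pairs: "finite (pairs m)"
proof -
  have "pairs m \<subseteq> {a. a \<subseteq># m} \<times> {a. a \<subseteq># m}"
    unfolding pairs_def by auto
  thus ?thesis using finite_submsets[of m] by (meson finite_SigmaI finite_subset)
qed

lemma s_mult_pairs: "s_mult f g m = (\<Sum>p\<in>pairs m. f (fst p) * g (snd p))"
proof -
  have "bij_betw (\<lambda>a. (a, m - a)) {a. a \<subseteq># m} (pairs m)"
    unfolding bij_betw_def inj_on_def pairs_def
    by (auto simp: image_def subset_mset.add_diff_inverse intro: exI[of _ "fst _"])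
  thus ?thesis unfolding s_mult_def by (simp add: sum.reindex_bij_betw[symmetric])
qed

lemma lam_zero[simp]: "(\<lambda>m. 0) = (0::'b \<Rightarrow> 'c::zero)"
  by (simp add: fun_eq_iff)

lemma lam_neg: "(\<lambda>m. - f m) = - (f::'b \<Rightarrow> 'c::ab_group_add)"
  by (simp add: fun_eq_iff)

lemma s_add_eq: "s_add f g = f + g"
  by (simp add: s_add_def fun_eq_iff)

lemma s_mult_comm: "s_mult f g = s_mult g (f::'a::comm_ring_1 series)"
proof (rule ext)
  fix m
  show "s_mult f g m = s_mult g f m"
    unfolding s_mult_pairs
    by (rule sum.reindex_bij_witness[where i="\<lambda>p. (snd p, fst p)" and j="\<lambda>p. (snd p, fst p)"])
       (auto simp: pairs_def add.commute mult.commute)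
qed

lemma s_mult_assoc: "s_mult (s_mult f g) h = s_mult f (s_mult g (h::'a::comm_ring_1 series))"
proof (rule ext)
  fix m
  have "s_mult (s_mult f g) h m = (\<Sum>x\<in>pairs m. \<Sum>y\<in>pairs (fst x). f (fst y) * g (snd y) * h (snd x))"
    unfolding s_mult_pairs by (simp add: sum_distrib_right)
  also have "\<dots> = (\<Sum>z\<in>Sigma (pairs m) (\<lambda>x. pairs (fst x)). f (fst (snd z)) * g (snd (snd z)) * h (snd (fst z)))"
    by (subst sum.Sigma) (auto simp: finite_pairs split_def)
  also have "\<dots> = (\<Sum>z\<in>Sigma (pairs m) (\<lambda>x. pairs (snd x)). f (fst (fst z)) * (g (fst (snd z)) * h (snd (snd z))))"
    by (rule sum.reindex_bij_witness[where j="\<lambda>z. ((fst (snd z), snd (snd z) + snd (fst z)), (snd (snd z), snd (fst z)))"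
          and i="\<lambda>z. ((fst (fst z) + fst (snd z), snd (snd z)), (fst (fst z), fst (snd z)))"])
       (auto simp: pairs_def mult.assoc add.assoc)
  also have "\<dots> = (\<Sum>x\<in>pairs m. \<Sum>y\<in>pairs (snd x). f (fst x) * (g (fst y) * h (snd y)))"
    by (subst sum.Sigma) (auto simp: finite_pairs split_def)
  also have "\<dots> = s_mult f (s_mult g h) m"
    unfolding s_mult_pairs by (simp add: sum_distrib_left)
  finally show "s_mult (s_mult f g) h m = s_mult f (s_mult g h) m" .
qed

lemma s_mult_add_right: "s_mult f (g + h) = s_mult f g + s_mult f (h::'a::comm_ring_1 series)"
  by (simp add: fun_eq_iff s_mult_def distrib_left sum.distrib)

lemma s_mult_add_left: "s_mult (f + g) h = s_mult f h + s_mult g (h::'a::comm_ring_1 series)"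
  by (simp add: fun_eq_iff s_mult_def distrib_right sum.distrib)

lemma s_mult_minus_right: "s_mult f (- g) = - s_mult f (g::'a::comm_ring_1 series)"
  by (simp add: fun_eq_iff s_mult_def sum_negf)

lemma s_mult_minus_left: "s_mult (- f) g = - s_mult f (g::'a::comm_ring_1 series)"
  by (simp add: fun_eq_iff s_mult_def sum_negf)

lemma s_mult_diff_right: "s_mult f (g - h) = s_mult f g - s_mult f (h::'a::comm_ring_1 series)"
  by (simp add: fun_eq_iff s_mult_def right_diff_distrib sum_subtractf)

lemma s_mult_diff_left: "s_mult (f - g) h = s_mult f h - s_mult g (h::'a::comm_ring_1 series)"
  by (simp add: fun_eq_iff s_mult_def left_diff_distrib sum_subtractf)

lemma s_mult_zero_right[simp]: "s_mult f 0 = (0::'a::comm_ring_1 series)"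
  by (simp add: fun_eq_iff s_mult_def)

lemma s_mult_zero_left[simp]: "s_mult 0 f = (0::'a::comm_ring_1 series)"
  by (simp add: fun_eq_iff s_mult_def)

lemma s_mult_sum_right: "s_mult f (\<Sum>i\<in>A. g i) = (\<Sum>i\<in>A. s_mult f (g i::'a::comm_ring_1 series))"
proof (induction A rule: infinite_finite_induct)
  case (insert x F)
  have e1: "sum g (insert x F) = g x + sum g F" using insert(1,2) by (rule sum.insert)
  have e2: "(\<Sum>i\<in>insert x F. s_mult f (g i)) = s_mult f (g x) + (\<Sum>i\<in>F. s_mult f (g i))" using insert(1,2) by (rule sum.insert)
  show ?case by (simp only: e1 e2 s_mult_add_right insert.IH)
qed (simp_all add: s_mult_def fun_eq_iff)

lemma s_mult_sum_left: "s_mult (\<Sum>i\<in>A. g i) f = (\<Sum>i\<in>A. s_mult (g i::'a::comm_ring_1 series) f)"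
proof (induction A rule: infinite_finite_induct)
  case (insert x F)
  have e1: "sum g (insert x F) = g x + sum g F" using insert(1,2) by (rule sum.insert)
  have e2: "(\<Sum>i\<in>insert x F. s_mult (g i) f) = s_mult (g x) f + (\<Sum>i\<in>F. s_mult (g i) f)" using insert(1,2) by (rule sum.insert)
  show ?case by (simp only: e1 e2 s_mult_add_left insert.IH)
qed (simp_all add: s_mult_def fun_eq_iff)

definition cm :: "'a::comm_ring_1 \<Rightarrow> 'a series \<Rightarrow> 'a series" where
  "cm c f = (\<lambda>m. c * f m)"

lemma s_mult_const: "s_mult (s_const c) f = cm c f"
proof (rule ext)
  fix m
  have "s_mult (s_const c) f m = (\<Sum>a\<in>{a. a \<subseteq># m}. if a = {#} then c * f (m - a) else 0)"
    unfolding s_mult_def s_const_def by (intro sum.cong) auto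
  also have "\<dots> = c * f m"
    by (subst sum.delta) (auto simp: finite_submsets)
  finally show "s_mult (s_const c) f m = cm c f m" by (simp add: cm_def)
qed

lemma s_mult_const_right: "s_mult f (s_const c) = cm c f"
  using s_mult_comm s_mult_const by metis

lemma s_mult_one[simp]: "s_mult (s_const 1) f = f" "s_mult f (s_const 1) = f"
  by (simp_all add: s_mult_const s_mult_const_right cm_def)

lemma cm_cm: "cm a (cm b f) = cm (a * b) f"
  by (simp add: cm_def mult.assoc)

lemma cm_s_mult: "cm c (s_mult f g) = s_mult (cm c f) g"
  by (metis s_mult_assoc s_mult_const)

lemma cm_s_mult2: "cm c (s_mult f g) = s_mult f (cm c g)"
  by (metis cm_s_mult s_mult_comm)

lemma cm_add: "cm c (f + g) = cm c f + cm c g"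
  by (simp add: cm_def fun_eq_iff distrib_left)

lemma cm_minus: "cm c (- f) = - cm c f"
  by (simp add: cm_def fun_eq_iff)

lemma cm_diff: "cm c (f - g) = cm c f - cm c g"
  by (simp add: cm_def fun_eq_iff right_diff_distrib)

lemma cm_sum: "cm c (\<Sum>i\<in>A. g i) = (\<Sum>i\<in>A. cm c (g i))"
proof (induction A rule: infinite_finite_induct)
  case (insert x F)
  have e1: "sum g (insert x F) = g x + sum g F" using insert(1,2) by (rule sum.insert)
  have e2: "(\<Sum>i\<in>insert x F. cm c (g i)) = cm c (g x) + (\<Sum>i\<in>F. cm c (g i))" using insert(1,2) by (rule sum.insert)
  show ?case by (simp only: e1 e2 cm_add insert.IH)
qed (simp_all add: cm_def fun_eq_iff)

lemma cm_one[simp]: "cm 1 f = f"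
  by (simp add: cm_def)

definition xvar :: "nat \<Rightarrow> 'a::comm_ring_1 series" where
  "xvar j = (\<lambda>m. if m = {#j#} then 1 else 0)"

definition der :: "nat \<Rightarrow> 'a::comm_ring_1 series \<Rightarrow> 'a series" where
  "der i f = (\<lambda>m. of_nat (Suc (count m i)) * f (m + {#i#}))"

definition gdec :: "nat \<Rightarrow> 'a::comm_ring_1 series \<Rightarrow> 'a series" where
  "gdec j f = (\<lambda>m. if (\<forall>k\<in>#m. j \<le> k) then f (m + {#j#}) else 0)"

lemma s_mult_nonzero:
  assumes "s_mult f g m \<noteq> 0"
  shows "\<exists>a b. a + b = m \<and> f a \<noteq> 0 \<and> g b \<noteq> 0"
proof -
  from assms obtain p where "p \<in> pairs m" "f (fst p) * g (snd p) \<noteq> 0"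
    unfolding s_mult_pairs by (meson sum.not_neutral_contains_not_neutral)
  thus ?thesis unfolding pairs_def by (intro exI[of _ "fst p"] exI[of _ "snd p"]) auto
qed

lemma R_ps_iff: "f \<in> R_ps n \<longleftrightarrow> (\<forall>m. f m \<noteq> 0 \<longrightarrow> set_mset m \<subseteq> {..<n})"
  by (simp add: R_ps_def)

lemma R_poly_iff: "f \<in> R_poly n \<longleftrightarrow> f \<in> R_ps n \<and> finite {m. f m \<noteq> 0}"
  by (simp add: R_poly_def)

lemma fin_supp_img: "finite {m. f m \<noteq> 0} \<Longrightarrow> (\<And>m. g m \<noteq> 0 \<Longrightarrow> f (h m) \<noteq> (0::'a::comm_ring_1)) \<Longrightarrow> inj h \<Longrightarrow> finite {m. g m \<noteq> (0::'a)}"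
proof -
  assume a: "finite {m. f m \<noteq> 0}" "\<And>m. g m \<noteq> 0 \<Longrightarrow> f (h m) \<noteq> 0" "inj h"
  have "{m. g m \<noteq> 0} \<subseteq> h -` {m. f m \<noteq> 0}" using a(2) by auto
  moreover have "finite (h -` {m. f m \<noteq> 0})" using a(1,3) finite_vimageI by blast
  ultimately show ?thesis by (rule finite_subset)
qed

lemma fin_supp_sub: "finite {m. f m \<noteq> 0} \<Longrightarrow> (\<And>m. g m \<noteq> 0 \<Longrightarrow> f m \<noteq> (0::'a::comm_ring_1)) \<Longrightarrow> finite {m. g m \<noteq> (0::'a)}"
  by (rule finite_subset[of _ "{m. f m \<noteq> 0}"]) auto

locale serring =
  fixes R :: "'a::comm_ring_1 series set" and n :: nat
  assumes RR: "R = R_ps n \<or> R = R_poly n"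
begin

lemma R_mem: "f \<in> R \<longleftrightarrow> (\<forall>m. f m \<noteq> 0 \<longrightarrow> set_mset m \<subseteq> {..<n}) \<and> (R = R_poly n \<longrightarrow> finite {m. f m \<noteq> 0})"
  using RR unfolding R_poly_def R_ps_def by auto

lemma R_memI: "(\<And>m. f m \<noteq> 0 \<Longrightarrow> set_mset m \<subseteq> {..<n}) \<Longrightarrow> (R = R_poly n \<Longrightarrow> finite {m. f m \<noteq> 0}) \<Longrightarrow> f \<in> R"
  using R_mem by blast

lemma R_supp: "f \<in> R \<Longrightarrow> f m \<noteq> 0 \<Longrightarrow> set_mset m \<subseteq> {..<n}"
  using R_mem by blast

lemma R_fin: "f \<in> R \<Longrightarrow> R = R_poly n \<Longrightarrow> finite {m. f m \<noteq> 0}"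
  using R_mem by blast

lemma mult_in: "f \<in> R \<Longrightarrow> g \<in> R \<Longrightarrow> s_mult f g \<in> R"
proof (rule R_memI)
  fix m assume "f \<in> R" "g \<in> R" "s_mult f g m \<noteq> 0"
  then obtain a b where "a + b = m" "f a \<noteq> 0" "g b \<noteq> 0" using s_mult_nonzero by blast
  thus "set_mset m \<subseteq> {..<n}" using R_supp \<open>f \<in> R\<close> \<open>g \<in> R\<close> by fastforce
next
  assume "f \<in> R" "g \<in> R" "R = R_poly n"
  hence fin: "finite {m. f m \<noteq> 0}" "finite {m. g m \<noteq> 0}" using R_fin by auto
  have "{m. s_mult f g m \<noteq> 0} \<subseteq> (\<lambda>p. fst p + snd p) ` ({m. f m \<noteq> 0} \<times> {m. g m \<noteq> 0})"
  proof
    fix m assume "m \<in> {m. s_mult f g m \<noteq> 0}"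
    then obtain a b where "a + b = m" "f a \<noteq> 0" "g b \<noteq> 0" using s_mult_nonzero by blast
    thus "m \<in> (\<lambda>p. fst p + snd p) ` ({m. f m \<noteq> 0} \<times> {m. g m \<noteq> 0})"
      by (intro image_eqI[of _ _ "(a,b)"]) auto
  qed
  thus "finite {m. s_mult f g m \<noteq> 0}" using fin by (meson finite_SigmaI finite_imageI finite_subset)
qed

lemma add_in: "f \<in> R \<Longrightarrow> g \<in> R \<Longrightarrow> f + g \<in> R"
proof (rule R_memI)
  fix m assume "f \<in> R" "g \<in> R" "(f + g) m \<noteq> 0"
  thus "set_mset m \<subseteq> {..<n}" using R_supp by (metis add.right_neutral plus_fun_apply)
next
  assume "f \<in> R" "g \<in> R" "R = R_poly n"
  hence fin: "finite {m. f m \<noteq> 0}" "finite {m. g m \<noteq> 0}" using R_fin by auto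
  show "finite {m. (f + g) m \<noteq> 0}"
    by (rule finite_subset[of _ "{m. f m \<noteq> 0} \<union> {m. g m \<noteq> 0}"]) (use fin in auto)
qed

lemma cm_in: "f \<in> R \<Longrightarrow> cm c f \<in> R"
proof (rule R_memI)
  fix m assume "f \<in> R" "cm c f m \<noteq> 0"
  thus "set_mset m \<subseteq> {..<n}" using R_supp by (metis cm_def mult_zero_right)
next
  assume "f \<in> R" "R = R_poly n"
  hence fin: "finite {m. f m \<noteq> 0}" using R_fin by auto
  show "finite {m. cm c f m \<noteq> 0}"
    by (rule fin_supp_sub[OF fin]) (auto simp: cm_def)
qed

lemma neg_in: "f \<in> R \<Longrightarrow> - f \<in> R"
proof -
  assume "f \<in> R"
  hence "cm (-1) f \<in> R" by (rule cm_in)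
  moreover have "cm (-1) f = - f" by (simp add: cm_def fun_eq_iff)
  ultimately show ?thesis by simp
qed

lemma diff_in: "f \<in> R \<Longrightarrow> g \<in> R \<Longrightarrow> f - g \<in> R"
  using add_in neg_in by (metis diff_conv_add_uminus)

lemma zero_in: "(0::'a series) \<in> R"
  by (rule R_memI) auto

lemma const_in: "s_const c \<in> R"
proof (rule R_memI)
  show "finite {m. s_const c m \<noteq> 0}"
    by (rule finite_subset[of _ "{{#}}"]) (auto simp: s_const_def)
qed (auto simp: s_const_def split: if_splits)

lemma sum_in: "(\<And>i. i \<in> A \<Longrightarrow> g i \<in> R) \<Longrightarrow> (\<Sum>i\<in>A. g i) \<in> R"
proof (induction A rule: infinite_finite_induct)
  case (insert x F)
  have e1: "sum g (insert x F) = g x + sum g F" using insert(1,2) by (rule sum.insert)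
  show ?case unfolding e1 using insert by (intro add_in) auto
qed (simp_all add: zero_in)

lemma xvar_in: "j < n \<Longrightarrow> xvar j \<in> R"
proof (rule R_memI)
  show "finite {m. xvar j m \<noteq> 0}"
    by (rule finite_subset[of _ "{{#j#}}"]) (auto simp: xvar_def)
qed (auto simp: xvar_def split: if_splits)

lemma der_in: "f \<in> R \<Longrightarrow> der i f \<in> R"
proof (rule R_memI)
  fix m assume "f \<in> R" "der i f m \<noteq> 0"
  hence "f (m + {#i#}) \<noteq> 0" by (auto simp: der_def)
  thus "set_mset m \<subseteq> {..<n}" using R_supp \<open>f \<in> R\<close> by fastforce
next
  assume "f \<in> R" "R = R_poly n"
  hence fin: "finite {m. f m \<noteq> 0}" using R_fin by auto
  show "finite {m. der i f m \<noteq> 0}"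
    by (rule fin_supp_img[OF fin, of _ "\<lambda>m. m + {#i#}"]) (auto simp: der_def inj_def)
qed

lemma gdec_in: "f \<in> R \<Longrightarrow> gdec j f \<in> R"
proof (rule R_memI)
  fix m assume "f \<in> R" "gdec j f m \<noteq> 0"
  hence "f (m + {#j#}) \<noteq> 0" by (auto simp: gdec_def split: if_splits)
  thus "set_mset m \<subseteq> {..<n}" using R_supp \<open>f \<in> R\<close> by fastforce
next
  assume "f \<in> R" "R = R_poly n"
  hence fin: "finite {m. f m \<noteq> 0}" using R_fin by auto
  show "finite {m. gdec j f m \<noteq> 0}"
    by (rule fin_supp_img[OF fin, of _ "\<lambda>m. m + {#j#}"]) (auto simp: gdec_def inj_def split: if_splits)
qed

end


lemma sum_apply: "(\<Sum>i\<in>A. g i) (m::'b) = (\<Sum>i\<in>A. g i m :: 'c::comm_monoid_add)"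
proof (induction A rule: infinite_finite_induct)
  case (insert x F)
  have e1: "sum g (insert x F) = g x + sum g F" using insert(1,2) by (rule sum.insert)
  show ?case unfolding e1 using insert by simp
qed simp_all

lemma xvar_mult: "s_mult (xvar j) h = (\<lambda>m. if j \<in># m then h (m - {#j#}) else 0)"
proof (rule ext)
  fix m
  have "s_mult (xvar j) h m = (\<Sum>a\<in>{a. a \<subseteq># m}. if a = {#j#} then h (m - a) else 0)"
    unfolding s_mult_def xvar_def by (intro sum.cong) auto
  also have "\<dots> = (if j \<in># m then h (m - {#j#}) else 0)"
    by (subst sum.delta) (auto simp: finite_submsets)
  finally show "s_mult (xvar j) h m = (if j \<in># m then h (m - {#j#}) else 0)" .
qed

lemma min_char:
  assumes "j \<in># m"
  shows "(\<forall>k\<in>#m - {#j#}. j \<le> k) \<longleftrightarrow> j = Min (set_mset m)"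
proof
  assume a: "\<forall>k\<in>#m - {#j#}. j \<le> k"
  have "\<forall>k\<in>#m. j \<le> k"
  proof
    fix k assume "k \<in># m"
    show "j \<le> k"
    proof (cases "k = j")
      case False
      hence "k \<in># m - {#j#}" using \<open>k \<in># m\<close> by (simp add: in_diff_count)
      thus ?thesis using a by blast
    qed simp
  qed
  thus "j = Min (set_mset m)" using assms by (intro Min_eqI[symmetric]) auto
next
  assume "j = Min (set_mset m)"
  thus "\<forall>k\<in>#m - {#j#}. j \<le> k" by (auto dest!: in_diffD)
qed

lemma (in serring) decomp:
  assumes f: "f \<in> R"
  shows "f = s_const (f {#}) + (\<Sum>j<n. s_mult (xvar j) (gdec j f))"
proof (rule ext)
  fix m
  show "f m = (s_const (f {#}) + (\<Sum>j<n. s_mult (xvar j) (gdec j f))) m"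
  proof (cases "m = {#}")
    case True
    thus ?thesis by (simp add: s_const_def xvar_mult sum_apply)
  next
    case False
    have "(\<Sum>j<n. s_mult (xvar j) (gdec j f)) m = (\<Sum>j<n. if j = Min (set_mset m) then f m else 0)"
      unfolding sum_apply xvar_mult gdec_def
    proof (intro sum.cong refl)
      fix j
      show "(if j \<in># m then if \<forall>k\<in>#m - {#j#}. j \<le> k then f (m - {#j#} + {#j#}) else 0 else 0) =
            (if j = Min (set_mset m) then f m else 0)"
        using min_char[of j m] False by (auto simp: Min_in)
    qed
    also have "\<dots> = f m"
    proof (cases "f m = 0")
      case False
      hence "set_mset m \<subseteq> {..<n}" using R_supp f by blast
      hence "Min (set_mset m) \<in> {..<n}" using \<open>m \<noteq> {#}\<close> by (meson Min_in finite_set_mset set_mset_eq_empty_iff subsetD)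
      have "(\<Sum>j<n. if j = Min (set_mset m) then f m else 0) = (\<Sum>j\<in>{..<n}. if Min (set_mset m) = j then f m else 0)"
        by (intro sum.cong) auto
      also have "\<dots> = f m" using \<open>Min (set_mset m) \<in> {..<n}\<close> by simp
      finally show ?thesis .
    qed simp
    finally show ?thesis using False by (simp add: s_const_def)
  qed
qed

definition van :: "nat \<Rightarrow> 'a::comm_ring_1 series \<Rightarrow> bool" where
  "van N f \<longleftrightarrow> (\<forall>m. size m < N \<longrightarrow> f m = 0)"

lemma van_xvar: "van N h \<Longrightarrow> van (Suc N) (s_mult (xvar j) h)"
  unfolding van_def xvar_mult
proof (intro allI impI)
  fix m :: "nat multiset" assume h: "\<forall>m. size m < N \<longrightarrow> h m = 0" and s: "size m < Suc N"
  show "(if j \<in># m then h (m - {#j#}) else 0) = 0"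
  proof (cases "j \<in># m")
    case True
    hence "size m > 0" by (metis gr0I empty_iff set_mset_empty size_eq_0_iff_empty)
    hence "size (m - {#j#}) < N" using s True by (simp add: size_Diff_singleton)
    thus ?thesis using h True by simp
  qed simp
qed

lemma van_add: "van N f \<Longrightarrow> van N g \<Longrightarrow> van N (f + g)"
  unfolding van_def by auto

lemma van_zero: "van N 0"
  unfolding van_def by auto

lemma van_sum: "(\<And>i. i \<in> A \<Longrightarrow> van N (g i)) \<Longrightarrow> van N (\<Sum>i\<in>A. g i)"
  unfolding van_def by (auto simp: sum_apply)

lemma van_all: "(\<And>N. van N f) \<Longrightarrow> f = 0"
  unfolding van_def by (metis lessI zero_fun_apply ext)


lemma der_add: "der i (f + g) = der i f + der i g"
  by (simp add: der_def fun_eq_iff distrib_left)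

lemma der_cm: "der i (cm c f) = cm c (der i f)"
  by (simp add: der_def cm_def fun_eq_iff mult.left_commute)

lemma der_neg: "der i (- f) = - der i f"
  by (simp add: der_def fun_eq_iff)

lemma der_diff: "der i (f - g) = der i f - der i g"
  by (simp add: der_def fun_eq_iff right_diff_distrib)

lemma der_xvar: "der i (xvar j) = s_const (if i = j then 1 else 0)"
proof (rule ext)
  fix m
  have "(m + {#i#} = {#j#}) \<longleftrightarrow> (m = {#} \<and> i = j)"
    by (metis add_cancel_right_left add_mset_eq_single add_mset_add_single empty_neutral(1))
  thus "der i (xvar j) m = s_const (if i = j then 1 else 0) m"
    by (auto simp: der_def xvar_def s_const_def)
qed

lemma der_const: "der i (s_const c) = 0"
  by (simp add: der_def s_const_def fun_eq_iff)

lemma shift_sum: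
  "(\<Sum>p\<in>pairs (m + {#i#}). of_nat (count (fst p) i) * F (fst p) (snd p)) =
   (\<Sum>q\<in>pairs m. of_nat (Suc (count (fst q) i)) * F (fst q + {#i#}) (snd q) :: 'a::comm_ring_1)"
proof -
  let ?h = "\<lambda>q. (fst q + {#i#}, snd q)"
  have inj: "inj_on ?h (pairs m)" by (auto simp: inj_on_def prod_eq_iff)
  have "(\<Sum>q\<in>pairs m. of_nat (Suc (count (fst q) i)) * F (fst q + {#i#}) (snd q) :: 'a) =
        (\<Sum>p\<in>?h ` pairs m. of_nat (count (fst p) i) * F (fst p) (snd p))"
    by (subst sum.reindex[OF inj]) simp
  also have "\<dots> = (\<Sum>p\<in>pairs (m + {#i#}). of_nat (count (fst p) i) * F (fst p) (snd p))"
  proof (rule sum.mono_neutral_left)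
    show "finite (pairs (m + {#i#}))" by (rule finite_pairs)
    show "?h ` pairs m \<subseteq> pairs (m + {#i#})" by (auto simp: pairs_def)
    show "\<forall>p\<in>pairs (m + {#i#}) - ?h ` pairs m. of_nat (count (fst p) i) * F (fst p) (snd p) = (0::'a)"
    proof
      fix p assume p: "p \<in> pairs (m + {#i#}) - ?h ` pairs m"
      have "count (fst p) i = 0"
      proof (rule ccontr)
        assume "count (fst p) i \<noteq> 0"
        hence ii: "i \<in># fst p" by (simp add: count_eq_zero_iff)
        have "(fst p - {#i#}, snd p) \<in> pairs m"
          using p ii unfolding pairs_def
          by (auto simp: insert_DiffM2)
        moreover have "p = ?h (fst p - {#i#}, snd p)" using ii by (simp add: prod_eq_iff)
        ultimately show False using p by blast
      qed
      thus "of_nat (count (fst p) i) * F (fst p) (snd p) = (0::'a)" by simp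
    qed
  qed
  finally show ?thesis by simp
qed

lemma der_leibniz: "der i (s_mult f g) = s_mult (der i f) g + s_mult f (der i (g::'a::comm_ring_1 series))"
proof (rule ext)
  fix m
  have cnt: "of_nat (Suc (count m i)) = (of_nat (count (fst p) i) + of_nat (count (snd p) i) :: 'a)"
    if "p \<in> pairs (m + {#i#})" for p
  proof -
    have "count (fst p + snd p) i = Suc (count m i)" using that unfolding pairs_def by simp
    hence "count (fst p) i + count (snd p) i = Suc (count m i)" by simp
    thus ?thesis by (metis of_nat_add)
  qed
  have "der i (s_mult f g) m = (\<Sum>p\<in>pairs (m + {#i#}). of_nat (Suc (count m i)) * (f (fst p) * g (snd p)))"
    unfolding der_def s_mult_pairs by (simp add: sum_distrib_left)
  also have "\<dots> = (\<Sum>p\<in>pairs (m + {#i#}). of_nat (count (fst p) i) * (f (fst p) * g (snd p)))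
      + (\<Sum>p\<in>pairs (m + {#i#}). of_nat (count (snd p) i) * (g (snd p) * f (fst p)))"
  proof -
    have "(\<Sum>p\<in>pairs (m + {#i#}). of_nat (Suc (count m i)) * (f (fst p) * g (snd p))) =
          (\<Sum>p\<in>pairs (m + {#i#}). of_nat (count (fst p) i) * (f (fst p) * g (snd p)) + of_nat (count (snd p) i) * (g (snd p) * f (fst p)))"
    proof (rule sum.cong[OF refl])
      fix p assume "p \<in> pairs (m + {#i#})"
      from cnt[OF this] show "of_nat (Suc (count m i)) * (f (fst p) * g (snd p)) =
          of_nat (count (fst p) i) * (f (fst p) * g (snd p)) + of_nat (count (snd p) i) * (g (snd p) * f (fst p))"
        by (simp only: distrib_right mult.commute[of "g _"])
    qed
    thus ?thesis by (simp only: sum.distrib)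
  qed
  also have "(\<Sum>p\<in>pairs (m + {#i#}). of_nat (count (snd p) i) * (g (snd p) * f (fst p))) =
      (\<Sum>p\<in>pairs (m + {#i#}). of_nat (count (fst p) i) * (g (fst p) * f (snd p)))"
    by (rule sum.reindex_bij_witness[where i="\<lambda>p. (snd p, fst p)" and j="\<lambda>p. (snd p, fst p)"])
       (auto simp: pairs_def add.commute)
  also have "(\<Sum>p\<in>pairs (m + {#i#}). of_nat (count (fst p) i) * (f (fst p) * g (snd p))) = s_mult (der i f) g m"
    unfolding shift_sum[where F="\<lambda>a b. f a * g b"] s_mult_pairs der_def by (simp add: mult.assoc)
  also have "(\<Sum>p\<in>pairs (m + {#i#}). of_nat (count (fst p) i) * (g (fst p) * f (snd p))) = s_mult (der i g) f m"
    unfolding shift_sum[where F="\<lambda>a b. g a * f b"] s_mult_pairs der_def by (simp add: mult.assoc)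
  finally show "der i (s_mult f g) m = (s_mult (der i f) g + s_mult f (der i g)) m"
    by (simp add: s_mult_comm[of f])
qed


definition com :: "('a::comm_ring_1 series \<Rightarrow> 'a series) \<Rightarrow> 'a series \<Rightarrow> 'a series \<Rightarrow> 'a series" where
  "com d r = (\<lambda>f. s_add (d (s_mult r f)) (\<lambda>m. - (s_mult r (d f)) m))"

lemma com_eq: "com d r f = d (s_mult r f) - s_mult r (d f)"
  by (simp add: com_def s_add_def fun_eq_iff)

lemma diffop_Suc_iff: "diffop R (Suc k) d \<longleftrightarrow> V_linear R d \<and> (\<forall>r\<in>R. diffop R k (com d r))"
  by (simp add: com_def)

lemma diffop_0_iff: "diffop R 0 d \<longleftrightarrow> (\<exists>a\<in>R. \<forall>f\<in>R. d f = s_mult a f)"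
  by simp

declare diffop.simps[simp del]

lemma com_com: "com (com P a) b f = com (com P b) a (f::'a::comm_ring_1 series)"
  unfolding com_eq
  by (simp add: s_mult_diff_right s_mult_assoc s_mult_comm[of a b] algebra_simps)
     (metis s_mult_assoc s_mult_comm)

context serring
begin

lemma V_linearD:
  assumes "V_linear R d"
  shows "f \<in> R \<Longrightarrow> d f \<in> R"
    and "f \<in> R \<Longrightarrow> g \<in> R \<Longrightarrow> d (f + g) = d f + d g"
    and "f \<in> R \<Longrightarrow> d (cm c f) = cm c (d f)"
  using assms unfolding V_linear_def by (auto simp: s_add_eq s_mult_const)
  
lemma V_linearI:
  assumes "\<And>f. f \<in> R \<Longrightarrow> d f \<in> R"
    and "\<And>f g. f \<in> R \<Longrightarrow> g \<in> R \<Longrightarrow> d (f + g) = d f + d g"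
    and "\<And>f c. f \<in> R \<Longrightarrow> d (cm c f) = cm c (d f)"
  shows "V_linear R d"
  using assms unfolding V_linear_def by (auto simp: s_add_eq s_mult_const)

lemma cm_m1: "cm (-1) f = - f"
  by (simp add: cm_def fun_eq_iff)

lemma V_lin_neg: "V_linear R d \<Longrightarrow> f \<in> R \<Longrightarrow> d (- f) = - d f"
  using V_linearD(3)[of d f "-1"] by (simp add: cm_m1)

lemma V_lin_diff: "V_linear R d \<Longrightarrow> f \<in> R \<Longrightarrow> g \<in> R \<Longrightarrow> d (f - g) = d f - d g"
  using V_linearD(2)[of d f "- g"] V_lin_neg[of d g] neg_in[of g] by simp

lemma V_lin_zero: "V_linear R d \<Longrightarrow> d 0 = 0"
proof -
  assume "V_linear R d"
  moreover have "cm 0 (0::'a series) = 0" by (simp add: cm_def fun_eq_iff)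
  ultimately show ?thesis using V_linearD(3)[of d 0 0] zero_in by (simp add: cm_def fun_eq_iff)
qed

lemma V_lin_sum: "V_linear R d \<Longrightarrow> (\<And>i. i \<in> A \<Longrightarrow> g i \<in> R) \<Longrightarrow> d (\<Sum>i\<in>A. g i) = (\<Sum>i\<in>A. d (g i))"
proof (induction A rule: infinite_finite_induct)
  case (insert x F)
  have e1: "sum g (insert x F) = g x + sum g F" using insert(1,2) by (rule sum.insert)
  have e2: "(\<Sum>i\<in>insert x F. d (g i)) = d (g x) + (\<Sum>i\<in>F. d (g i))" using insert(1,2) by (rule sum.insert)
  show ?case unfolding e1 e2 using insert by (subst V_linearD(2)) (auto intro: sum_in)
qed (simp_all add: V_lin_zero fun_eq_iff)

lemma V_linear_cong: "V_linear R d \<Longrightarrow> (\<And>f. f \<in> R \<Longrightarrow> d f = e f) \<Longrightarrow> V_linear R e"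
proof -
  assume l: "V_linear R d" and e: "\<And>f. f \<in> R \<Longrightarrow> d f = e f"
  show "V_linear R e"
    by (rule V_linearI) (auto simp: V_linearD[OF l] add_in cm_in e[symmetric])
qed

lemma diffop_cong: "diffop R k d \<Longrightarrow> (\<And>f. f \<in> R \<Longrightarrow> d f = e f) \<Longrightarrow> diffop R k e"
proof (induction k arbitrary: d e)
  case 0
  thus ?case by (auto simp: diffop_0_iff)
next
  case (Suc k)
  show ?case unfolding diffop_Suc_iff
  proof (intro conjI ballI)
    show "V_linear R e" using Suc.prems V_linear_cong by (auto simp: diffop_Suc_iff)
    fix r assume r: "r \<in> R"
    have "diffop R k (com d r)" using Suc.prems(1) r by (auto simp: diffop_Suc_iff)
    thus "diffop R k (com e r)"
      by (rule Suc.IH) (simp add: com_eq Suc.prems(2) mult_in r)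
  qed
qed

lemma diffop_maps: "diffop R k d \<Longrightarrow> f \<in> R \<Longrightarrow> d f \<in> R"
  by (cases k) (auto simp: mult_in V_linear_def diffop_0_iff diffop_Suc_iff)

lemma diffop0_V_linear: "diffop R 0 d \<Longrightarrow> V_linear R d"
proof -
  assume "diffop R 0 d"
  then obtain a where a: "a \<in> R" "\<And>f. f \<in> R \<Longrightarrow> d f = s_mult a f" by (auto simp: diffop_0_iff)
  show "V_linear R d"
    by (rule V_linearI) (auto simp: a mult_in add_in cm_in s_mult_add_right cm_s_mult2)
qed

lemma diffop_V_linear: "diffop R k d \<Longrightarrow> V_linear R d"
  by (cases k) (auto simp: diffop0_V_linear diffop_Suc_iff)

lemma com_mult0: "a \<in> R \<Longrightarrow> r \<in> R \<Longrightarrow> (\<And>f. f \<in> R \<Longrightarrow> d f = s_mult a f) \<Longrightarrow> f \<in> R \<Longrightarrow> com d r f = 0"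
  unfolding com_eq by (simp add: mult_in) (metis s_mult_assoc s_mult_comm)

lemma diffop_zero: "(\<And>f. f \<in> R \<Longrightarrow> d f = 0) \<Longrightarrow> diffop R 0 d"
  using zero_in by (auto simp: diffop_0_iff intro!: bexI[of _ 0])

lemma diffop_Suc_mono: "diffop R k d \<Longrightarrow> diffop R (Suc k) d"
proof (induction k arbitrary: d)
  case 0
  then obtain a where a: "a \<in> R" "\<And>f. f \<in> R \<Longrightarrow> d f = s_mult a f" by (auto simp: diffop_0_iff)
  show ?case unfolding diffop_Suc_iff
    using diffop0_V_linear[OF 0] com_mult0[OF a(1) _ a(2)] by (auto intro: diffop_zero)
next
  case (Suc k)
  from Suc.prems have "V_linear R d" "\<forall>r\<in>R. diffop R k (com d r)" by (simp_all add: diffop_Suc_iff)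
  thus ?case using Suc.IH unfolding diffop_Suc_iff[of R "Suc k"] by blast
qed

lemma diffop_mono: "k \<le> l \<Longrightarrow> diffop R k d \<Longrightarrow> diffop R l d"
  by (induction l rule: dec_induct) (auto intro: diffop_Suc_mono)

lemma diffop_add: "diffop R k d \<Longrightarrow> diffop R k e \<Longrightarrow> diffop R k (\<lambda>f. d f + e f)"
proof (induction k arbitrary: d e)
  case 0
  then obtain a b where a: "a \<in> R" "\<And>f. f \<in> R \<Longrightarrow> d f = s_mult a f"
    and b: "b \<in> R" "\<And>f. f \<in> R \<Longrightarrow> e f = s_mult b f" by (auto simp: diffop_0_iff)
  show ?case unfolding diffop_0_iff
    by (rule bexI[of _ "a + b"]) (auto simp: a b s_mult_add_left add_in)
next
  case (Suc k)
  show ?case unfolding diffop_Suc_iff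
  proof (intro conjI ballI)
    have ld: "V_linear R d" and le: "V_linear R e" using Suc.prems by (auto simp: diffop_Suc_iff)
    show "V_linear R (\<lambda>f. d f + e f)"
      by (rule V_linearI) (auto simp: V_linearD[OF ld] V_linearD[OF le] add_in cm_add)
    fix r assume r: "r \<in> R"
    have "diffop R k (\<lambda>f. com d r f + com e r f)"
      by (rule Suc.IH) (use Suc.prems r in \<open>auto simp: diffop_Suc_iff\<close>)
    thus "diffop R k (com (\<lambda>f. d f + e f) r)"
      by (rule diffop_cong) (simp add: com_eq s_mult_add_right)
  qed
qed

lemma diffop_lmult: "a \<in> R \<Longrightarrow> diffop R k d \<Longrightarrow> diffop R k (\<lambda>f. s_mult a (d f))"
proof (induction k arbitrary: d)
  case 0
  then obtain b where b: "b \<in> R" "\<And>f. f \<in> R \<Longrightarrow> d f = s_mult b f" by (auto simp: diffop_0_iff)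
  show ?case unfolding diffop_0_iff
    by (rule bexI[of _ "s_mult a b"]) (auto simp: b s_mult_assoc mult_in 0)
next
  case (Suc k)
  show ?case unfolding diffop_Suc_iff
  proof (intro conjI ballI)
    have ld: "V_linear R d" using Suc.prems by (auto simp: diffop_Suc_iff)
    show "V_linear R (\<lambda>f. s_mult a (d f))"
      by (rule V_linearI) (auto simp: V_linearD[OF ld] Suc.prems mult_in s_mult_add_right cm_s_mult2)
    fix r assume r: "r \<in> R"
    have "diffop R k (\<lambda>f. s_mult a (com d r f))"
      by (rule Suc.IH) (use Suc.prems r in \<open>auto simp: diffop_Suc_iff\<close>)
    thus "diffop R k (com (\<lambda>f. s_mult a (d f)) r)"
      by (rule diffop_cong) (simp add: com_eq s_mult_diff_right, metis s_mult_assoc s_mult_comm)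
  qed
qed

lemma diffop_rmult: "a \<in> R \<Longrightarrow> diffop R k d \<Longrightarrow> diffop R k (\<lambda>f. d (s_mult a f))"
proof (induction k arbitrary: d)
  case 0
  then obtain b where b: "b \<in> R" "\<And>f. f \<in> R \<Longrightarrow> d f = s_mult b f" by (auto simp: diffop_0_iff)
  show ?case unfolding diffop_0_iff
    by (rule bexI[of _ "s_mult b a"]) (auto simp: b s_mult_assoc mult_in 0)
next
  case (Suc k)
  show ?case unfolding diffop_Suc_iff
  proof (intro conjI ballI)
    have ld: "V_linear R d" using Suc.prems by (auto simp: diffop_Suc_iff)
    show "V_linear R (\<lambda>f. d (s_mult a f))"
    proof (rule V_linearI)
      fix f c assume f: "f \<in> R"
      have "s_mult a (cm c f) = cm c (s_mult a f)" by (simp add: cm_s_mult2)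
      thus "d (s_mult a (cm c f)) = cm c (d (s_mult a f))"
        using V_linearD(3)[OF ld, of "s_mult a f" c] mult_in[OF Suc.prems(1) f] by simp
    qed (auto simp: V_linearD[OF ld] Suc.prems mult_in s_mult_add_right)
    fix r assume r: "r \<in> R"
    have "diffop R k (\<lambda>f. com d r (s_mult a f))"
      by (rule Suc.IH) (use Suc.prems r in \<open>auto simp: diffop_Suc_iff\<close>)
    thus "diffop R k (com (\<lambda>f. d (s_mult a f)) r)"
      by (rule diffop_cong) (simp add: com_eq, metis s_mult_assoc s_mult_comm)
  qed
qed

lemma diffop_cm: "diffop R k d \<Longrightarrow> diffop R k (\<lambda>f. cm c (d f))"
  using diffop_lmult[OF const_in, of k d c] by (simp add: s_mult_const)

lemma diffop_neg: "diffop R k d \<Longrightarrow> diffop R k (\<lambda>f. - d f)"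
  using diffop_cm[of k d "-1"] by (simp add: cm_m1)

lemma diffop_diff: "diffop R k d \<Longrightarrow> diffop R k e \<Longrightarrow> diffop R k (\<lambda>f. d f - e f)"
  using diffop_add[of k d "\<lambda>f. - e f"] diffop_neg[of k e] by simp

lemma diffop_sum: "(\<And>i. i \<in> A \<Longrightarrow> diffop R k (d i)) \<Longrightarrow> diffop R k (\<lambda>f. \<Sum>i\<in>A. d i f)"
proof (induction A rule: infinite_finite_induct)
  case (infinite A)
  have "diffop R 0 (\<lambda>f. 0)" by (rule diffop_zero) simp
  hence "diffop R k (\<lambda>f. 0)" by (rule diffop_mono[rotated]) simp
  thus ?case by (rule diffop_cong) (simp add: infinite(1))
next
  case empty
  have "diffop R 0 (\<lambda>f. 0)" by (rule diffop_zero) simp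
  hence "diffop R k (\<lambda>f. 0)" by (rule diffop_mono[rotated]) simp
  thus ?case by (rule diffop_cong) simp
next
  case (insert x F)
  have "diffop R k (\<lambda>f. d x f + (\<Sum>i\<in>F. d i f))"
    by (rule diffop_add) (use insert in auto)
  thus ?case by (rule diffop_cong) (simp only: sum.insert[OF insert(1,2)])
qed

lemma diffop_comp: "diffop R k d \<Longrightarrow> diffop R l e \<Longrightarrow> diffop R (k + l) (\<lambda>f. d (e f))"
proof (induction "k + l" arbitrary: k l d e rule: less_induct)
  case less
  show ?case
  proof (cases "k = 0")
    case True
    then obtain a where a: "a \<in> R" "\<And>f. f \<in> R \<Longrightarrow> d f = s_mult a f" using less.prems by (auto simp: diffop_0_iff)
    have "diffop R l (\<lambda>f. s_mult a (e f))" by (rule diffop_lmult[OF a(1) less.prems(2)])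
    thus ?thesis using True by (rule_tac diffop_cong) (auto simp: a diffop_maps[OF less.prems(2)])
  next
    case k: False
    show ?thesis
    proof (cases "l = 0")
      case True
      then obtain b where b: "b \<in> R" "\<And>f. f \<in> R \<Longrightarrow> e f = s_mult b f" using less.prems by (auto simp: diffop_0_iff)
      have "diffop R k (\<lambda>f. d (s_mult b f))" by (rule diffop_rmult[OF b(1) less.prems(1)])
      thus ?thesis using True by (rule_tac diffop_cong) (auto simp: b)
    next
      case l: False
      obtain k' where k': "k = Suc k'" using k by (cases k) auto
      obtain l' where l': "l = Suc l'" using l by (cases l) auto
      have dk: "V_linear R d" "\<And>r. r \<in> R \<Longrightarrow> diffop R k' (com d r)"
        using less.prems(1) k' by (auto simp: diffop_Suc_iff)
      have el: "V_linear R e" "\<And>r. r \<in> R \<Longrightarrow> diffop R l' (com e r)"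
        using less.prems(2) l' by (auto simp: diffop_Suc_iff)
      have "diffop R (Suc (k' + l)) (\<lambda>f. d (e f))" unfolding diffop_Suc_iff
      proof (intro conjI ballI)
        show "V_linear R (\<lambda>f. d (e f))"
          by (rule V_linearI) (auto simp: V_linearD[OF dk(1)] V_linearD[OF el(1)])
        fix r assume r: "r \<in> R"
        have A: "diffop R (k + l') (\<lambda>f. d (com e r f))"
          using less.hyps[of k l'] less.prems(1) el(2)[OF r] l' by simp
        have B: "diffop R (k' + l) (\<lambda>f. com d r (e f))"
          using less.hyps[of k' l] less.prems(2) dk(2)[OF r] k' by simp
        have A': "diffop R (k' + l) (\<lambda>f. d (com e r f))" using A k' l' by simp
        have "diffop R (k' + l) (\<lambda>f. d (com e r f) + com d r (e f))"
          using diffop_add[OF A' B] by simp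
        thus "diffop R (k' + l) (com (\<lambda>f. d (e f)) r)"
        proof (rule diffop_cong)
          fix f assume f: "f \<in> R"
          have ef: "e f \<in> R" "e (s_mult r f) \<in> R" "s_mult r (e f) \<in> R"
            using V_linearD(1)[OF el(1)] f r mult_in by auto
          have "d (e (s_mult r f)) = d (com e r f + s_mult r (e f))" by (simp add: com_eq)
          also have "\<dots> = d (com e r f) + d (s_mult r (e f))"
            using ef by (subst V_linearD(2)[OF dk(1)]) (auto simp: com_eq diff_in)
          finally show "d (com e r f) + com d r (e f) = com (\<lambda>f. d (e f)) r f"
            by (simp add: com_eq)
        qed
      qed
      thus ?thesis using k' l' by simp
    qed
  qed
qed

end


fun ordz :: "'a::comm_ring_1 series set \<Rightarrow> nat \<Rightarrow> ('a series \<Rightarrow> 'a series) \<Rightarrow> bool" where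
  "ordz R 0 P \<longleftrightarrow> (\<forall>f\<in>R. P f = 0)"
| "ordz R (Suc k) P \<longleftrightarrow> diffop R k P"

definition Top :: "nat \<Rightarrow> nat \<Rightarrow> ('a::comm_ring_1 series \<Rightarrow> 'a series) \<Rightarrow> 'a series \<Rightarrow> 'a series" where
  "Top n k d = (\<lambda>f. cm (of_nat k) (d f) - (\<Sum>i<n. com d (xvar i) (der i f)))"

lemma cm_const_one: "cm c (s_const 1) = s_const c"
  by (simp add: cm_def s_const_def fun_eq_iff)

context serring
begin

lemma ordz_cong: "ordz R k d \<Longrightarrow> (\<And>f. f \<in> R \<Longrightarrow> d f = e f) \<Longrightarrow> ordz R k e"
  by (cases k) (auto intro: diffop_cong)

lemma der_diffop: "diffop R 1 (der i)"
  unfolding One_nat_def diffop_Suc_iff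
proof (intro conjI ballI)
  show "V_linear R (der i)"
    by (rule V_linearI) (auto simp: der_in der_add der_cm)
  fix r assume r: "r \<in> R"
  show "diffop R 0 (com (der i) r)"
    unfolding diffop_0_iff
    by (rule bexI[of _ "der i r"]) (auto simp: com_eq der_leibniz der_in r)
qed

lemma com_add:
  assumes "V_linear R d" "r \<in> R" "u \<in> R" "v \<in> R"
  shows "com d r (u + v) = com d r u + com d r v"
  using assms by (simp add: com_eq s_mult_add_right V_linearD[OF assms(1)] mult_in)

lemma com_zero:
  assumes "V_linear R d"
  shows "com d r 0 = 0"
  using assms by (simp add: com_eq V_lin_zero)

lemma zlem0:
  assumes lin: "V_linear R P" and c: "\<And>j f. j < n \<Longrightarrow> f \<in> R \<Longrightarrow> com P (xvar j) f = 0"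
  shows "diffop R 0 P"
proof -
  define a where "a = P (s_const 1)"
  have aR: "a \<in> R" unfolding a_def using V_linearD(1)[OF lin const_in] .
  have Pc: "P (s_const c) = s_mult a (s_const c)" for c
  proof -
    have "P (s_const c) = P (cm c (s_const 1))" by (simp add: cm_const_one)
    also have "\<dots> = cm c a" unfolding a_def by (rule V_linearD(3)[OF lin const_in])
    finally show ?thesis by (simp add: s_mult_const_right)
  qed
  have Px: "P (s_mult (xvar j) g) = s_mult (xvar j) (P g)" if "j < n" "g \<in> R" for j g
    using c[OF that] by (simp add: com_eq)
  have van: "van N (P f - s_mult a f)" if "f \<in> R" for N f
    using that
  proof (induction N arbitrary: f)
    case 0
    thus ?case by (simp add: van_def)
  next
    case (Suc N)
    let ?g = "\<lambda>j. gdec j f"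
    have gR: "?g j \<in> R" for j using gdec_in Suc.prems by blast
    have xgR: "s_mult (xvar j) (?g j) \<in> R" if "j < n" for j using mult_in xvar_in gR that by blast
    have fd: "f = s_const (f {#}) + (\<Sum>j<n. s_mult (xvar j) (?g j))" using decomp Suc.prems by blast
    have "P f = P (s_const (f {#})) + (\<Sum>j<n. P (s_mult (xvar j) (?g j)))"
      by (subst fd, subst V_linearD(2)[OF lin const_in sum_in], use xgR in simp)
         (subst V_lin_sum[OF lin], use xgR in auto)
    also have "\<dots> = s_mult a (s_const (f {#})) + (\<Sum>j<n. s_mult (xvar j) (P (?g j)))"
      using Px gR by (simp add: Pc)
    finally have e1: "P f = s_mult a (s_const (f {#})) + (\<Sum>j<n. s_mult (xvar j) (P (?g j)))" .
    have "s_mult a f = s_mult a (s_const (f {#})) + (\<Sum>j<n. s_mult a (s_mult (xvar j) (?g j)))"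
      by (subst fd) (simp add: s_mult_add_right s_mult_sum_right)
    also have "\<dots> = s_mult a (s_const (f {#})) + (\<Sum>j<n. s_mult (xvar j) (s_mult a (?g j)))"
      by (metis (no_types, lifting) s_mult_assoc s_mult_comm)
    finally have e2: "s_mult a f = s_mult a (s_const (f {#})) + (\<Sum>j<n. s_mult (xvar j) (s_mult a (?g j)))" .
    have "P f - s_mult a f = (\<Sum>j<n. s_mult (xvar j) (P (?g j)) - s_mult (xvar j) (s_mult a (?g j)))"
      unfolding e1 e2 by (simp add: sum_subtractf)
    also have "\<dots> = (\<Sum>j<n. s_mult (xvar j) (P (?g j) - s_mult a (?g j)))"
      by (simp add: s_mult_diff_right)
    finally show ?case
      by (simp only:) (rule van_sum, rule van_xvar, rule Suc.IH[OF gR])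
  qed
  have "P f = s_mult a f" if "f \<in> R" for f
    using van_all[of "P f - s_mult a f"] van[OF that] by simp
  thus ?thesis unfolding diffop_0_iff using aR by blast
qed

lemma zlem: "diffop R (Suc k) P \<Longrightarrow> (\<And>j. j < n \<Longrightarrow> ordz R k (com P (xvar j))) \<Longrightarrow> diffop R k P"
proof (induction k arbitrary: P)
  case 0
  show ?case
  proof (rule zlem0)
    show "V_linear R P" using 0 by (auto simp: diffop_Suc_iff)
    fix j f assume "j < n" "f \<in> R"
    thus "com P (xvar j) f = 0" using 0(2)[of j] by simp
  qed
next
  case (Suc k)
  show ?case unfolding diffop_Suc_iff
  proof (intro conjI ballI)
    show "V_linear R P" using Suc.prems by (auto simp: diffop_Suc_iff)
    fix r assume r: "r \<in> R"
    show "diffop R k (com P r)"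
    proof (rule Suc.IH)
      show "diffop R (Suc k) (com P r)" using Suc.prems(1) r by (auto simp: diffop_Suc_iff)
      fix j assume j: "j < n"
      have dj: "diffop R k (com P (xvar j))" using Suc.prems(2)[OF j] by simp
      have "ordz R k (com (com P (xvar j)) r)"
      proof (cases k)
        case 0
        then obtain b where b: "b \<in> R" "\<And>f. f \<in> R \<Longrightarrow> com P (xvar j) f = s_mult b f"
          using dj by (auto simp: diffop_0_iff)
        show ?thesis using 0 com_mult0[OF b(1) r b(2)] by simp
      next
        case (Suc k')
        thus ?thesis using dj r by (auto simp: diffop_Suc_iff)
      qed
      thus "ordz R k (com (com P r) (xvar j))"
        by (rule ordz_cong) (simp add: com_com)
    qed
  qed
qed

end


context serring
begin

lemma top_com:
  assumes d: "V_linear R d" and j: "j < n" and f: "f \<in> R"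
  shows "com (Top n (Suc k) d) (xvar j) f = Top n k (com d (xvar j)) f"
proof -
  let ?X = "xvar j :: 'a series"
  let ?c = "\<lambda>i. com d (xvar i)"
  have XR: "?X \<in> R" using xvar_in j by blast
  have XfR: "s_mult ?X f \<in> R" using mult_in XR f by blast
  have dX: "der i (s_mult ?X f) = (if i = j then f else 0) + s_mult ?X (der i f)" for i
    by (cases "i = j") (simp_all add: der_leibniz der_xvar s_mult_const cm_def)
  have c1: "?c i (der i (s_mult ?X f)) = (if i = j then ?c j f else 0) + ?c i (s_mult ?X (der i f))"
    if i: "i < n" for i
  proof -
    have "?c i (der i (s_mult ?X f)) = ?c i (if i = j then f else 0) + ?c i (s_mult ?X (der i f))"
      unfolding dX using xvar_in[OF i] f zero_in der_in mult_in XR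
      by (intro com_add[OF d]) auto
    thus ?thesis using com_zero[OF d] by simp
  qed
  have c2: "?c i (s_mult ?X g) = s_mult ?X (?c i g) + com (?c j) (xvar i) g" for i g
  proof -
    have "com (?c i) ?X g = com (?c j) (xvar i) g" by (rule com_com)
    thus ?thesis unfolding com_eq[of "?c i" ?X g] by (simp add: algebra_simps)
  qed
  have sumc: "(\<Sum>i<n. ?c i (der i (s_mult ?X f))) =
      ?c j f + ((\<Sum>i<n. s_mult ?X (?c i (der i f))) + (\<Sum>i<n. com (?c j) (xvar i) (der i f)))"
  proof -
    have "(\<Sum>i<n. ?c i (der i (s_mult ?X f))) =
        (\<Sum>i<n. (if i = j then ?c j f else 0) + (s_mult ?X (?c i (der i f)) + com (?c j) (xvar i) (der i f)))"
      by (intro sum.cong refl) (simp add: c1 c2)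
    also have "\<dots> = (\<Sum>i<n. (if i = j then ?c j f else 0)) + ((\<Sum>i<n. s_mult ?X (?c i (der i f))) + (\<Sum>i<n. com (?c j) (xvar i) (der i f)))"
      by (simp only: sum.distrib)
    also have "(\<Sum>i<n. (if i = j then ?c j f else 0)) = ?c j f" using j by simp
    finally show ?thesis .
  qed
  have T1: "Top n (Suc k) d (s_mult ?X f) = cm (of_nat (Suc k)) (d (s_mult ?X f)) - (\<Sum>i<n. ?c i (der i (s_mult ?X f)))"
    by (simp add: Top_def)
  have T2: "s_mult ?X (Top n (Suc k) d f) = cm (of_nat (Suc k)) (s_mult ?X (d f)) - (\<Sum>i<n. s_mult ?X (?c i (der i f)))"
    by (simp add: Top_def s_mult_diff_right s_mult_sum_right cm_s_mult2)
  have cmk: "cm (of_nat (Suc k)) y - y = cm (of_nat k) y" for y :: "'a series"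
    by (simp add: cm_def fun_eq_iff algebra_simps)
  have "com (Top n (Suc k) d) ?X f = Top n (Suc k) d (s_mult ?X f) - s_mult ?X (Top n (Suc k) d f)"
    by (simp add: com_eq)
  also have "\<dots> = cm (of_nat (Suc k)) (d (s_mult ?X f) - s_mult ?X (d f)) - ?c j f - (\<Sum>i<n. com (?c j) (xvar i) (der i f))"
    unfolding T1 T2 sumc cm_diff by (simp add: algebra_simps)
  also have "\<dots> = cm (of_nat k) (?c j f) - (\<Sum>i<n. com (?c j) (xvar i) (der i f))"
    using cmk[of "?c j f"] by (simp add: com_eq)
  also have "\<dots> = Top n k (?c j) f" by (simp add: Top_def)
  finally show ?thesis .
qed

lemma top_ord: "diffop R k d \<Longrightarrow> ordz R k (Top n k d)"
proof (induction k arbitrary: d)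
  case 0
  then obtain b where b: "b \<in> R" "\<And>f. f \<in> R \<Longrightarrow> d f = s_mult b f" by (auto simp: diffop_0_iff)
  have "Top n 0 d f = 0" if f: "f \<in> R" for f
  proof -
    have "com d (xvar i) (der i f) = 0" if "i < n" for i
      using com_mult0[OF b(1) xvar_in[OF that] b(2) der_in[OF f]] .
    hence "(\<Sum>i<n. com d (xvar i) (der i f)) = 0" by (intro sum.neutral) simp
    moreover have "cm (of_nat 0) (d f) = 0" by (simp add: cm_def fun_eq_iff)
    ultimately show ?thesis by (simp add: Top_def)
  qed
  thus ?case by simp
next
  case (Suc k)
  have lin: "V_linear R d" using Suc.prems by (simp add: diffop_Suc_iff)
  have ci: "diffop R k (com d (xvar i))" if "i < n" for i
    using Suc.prems xvar_in[OF that] by (simp add: diffop_Suc_iff)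
  have "diffop R (Suc k) (Top n (Suc k) d)"
    unfolding Top_def
  proof (rule diffop_diff)
    show "diffop R (Suc k) (\<lambda>f. cm (of_nat (Suc k)) (d f))" by (rule diffop_cm[OF Suc.prems])
    show "diffop R (Suc k) (\<lambda>f. \<Sum>i<n. com d (xvar i) (der i f))"
    proof (rule diffop_sum)
      fix i assume "i \<in> {..<n}"
      hence "diffop R (k + 1) (\<lambda>f. com d (xvar i) (der i f))"
        using diffop_comp[OF ci der_diffop] by simp
      thus "diffop R (Suc k) (\<lambda>f. com d (xvar i) (der i f))" by simp
    qed
  qed
  hence "diffop R k (Top n (Suc k) d)"
  proof (rule zlem)
    fix j assume j: "j < n"
    have "ordz R k (Top n k (com d (xvar j)))" by (rule Suc.IH[OF ci[OF j]])
    thus "ordz R k (com (Top n (Suc k) d) (xvar j))"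
      by (rule ordz_cong) (simp add: top_com[OF lin j])
  qed
  thus ?case by simp
qed

lemma main_op:
  assumes JR: "J \<subseteq> R" and J0: "0 \<in> J"
    and Jadd: "\<And>a b. a \<in> J \<Longrightarrow> b \<in> J \<Longrightarrow> a + b \<in> J"
    and Jmult: "\<And>r a. r \<in> R \<Longrightarrow> a \<in> J \<Longrightarrow> s_mult r a \<in> J"
    and Jder: "\<And>i a. i < n \<Longrightarrow> a \<in> J \<Longrightarrow> der i a \<in> J"
    and Jsat: "\<And>k b. 0 < k \<Longrightarrow> b \<in> R \<Longrightarrow> cm (of_nat k) b \<in> J \<Longrightarrow> b \<in> J"
  shows "diffop R k d \<Longrightarrow> a \<in> J \<Longrightarrow> d a \<in> J"
proof (induction k arbitrary: d a rule: less_induct)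
  case (less k)
  have Jneg: "- b \<in> J" if "b \<in> J" for b
    using Jmult[OF const_in that, of "-1"] by (simp add: s_mult_const cm_m1)
  have Jsum: "(\<Sum>i\<in>A. g i) \<in> J" if "\<And>i. i \<in> A \<Longrightarrow> g i \<in> J" for A g
    using that
  proof (induction A rule: infinite_finite_induct)
    case (insert x F)
    have e1: "sum g (insert x F) = g x + sum g F" using insert(1,2) by (rule sum.insert)
    show ?case unfolding e1 using insert by (intro Jadd) auto
  qed (simp_all add: J0)
  have aR: "a \<in> R" using less.prems(2) JR by blast
  show ?case
  proof (cases k)
    case 0
    then obtain b where b: "b \<in> R" "\<And>f. f \<in> R \<Longrightarrow> d f = s_mult b f"
      using less.prems(1) by (auto simp: diffop_0_iff)
    show ?thesis using b(2)[OF aR] Jmult[OF b(1) less.prems(2)] by simp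
  next
    case (Suc k')
    have T: "Top n k d a \<in> J"
      using less.IH[of k' "Top n k d" a] top_ord[OF less.prems(1)] Suc less.prems(2) by simp
    have C: "com d (xvar i) (der i a) \<in> J" if "i < n" for i
    proof -
      have "diffop R k' (com d (xvar i))"
        using less.prems(1) Suc xvar_in[OF that] by (simp add: diffop_Suc_iff)
      thus ?thesis using less.IH[of k'] Suc Jder[OF that less.prems(2)] by simp
    qed
    have "cm (of_nat k) (d a) = Top n k d a + (\<Sum>i<n. com d (xvar i) (der i a))"
      by (simp add: Top_def)
    also have "\<dots> \<in> J" using T C by (intro Jadd Jsum) auto
    finally have "cm (of_nat k) (d a) \<in> J" .
    thus ?thesis using Jsat[of k "d a"] Suc diffop_maps[OF less.prems(1) aR] by simp
  qed
qed

end


context serring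
begin

lemma diffop_Dring: "diffop R k d \<Longrightarrow> restrict d R \<in> Dring R"
  unfolding Dring_def by (auto intro!: exI[of _ k] elim: diffop_cong)

lemma Dring_diffop: "d \<in> Dring R \<Longrightarrow> \<exists>k. diffop R k d"
  unfolding Dring_def by auto

lemma mult_op_eq: "mult_op R r = restrict (\<lambda>f. s_mult r f) R"
  by (simp add: mult_op_def)

lemma mult_op_Dring: "r \<in> R \<Longrightarrow> mult_op R r \<in> Dring R"
  unfolding mult_op_eq by (rule diffop_Dring[of 0]) (auto simp: diffop_0_iff)

lemma D_add_eq: "D_add R d e = restrict (\<lambda>f. d f + e f) R"
  by (simp add: D_add_def s_add_eq)

lemma D_mult_eq: "D_mult R d e = restrict (\<lambda>f. d (e f)) R"
  by (simp add: D_mult_def compose_def)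

lemma D_add_Dring: "d \<in> Dring R \<Longrightarrow> e \<in> Dring R \<Longrightarrow> D_add R d e \<in> Dring R"
proof -
  assume "d \<in> Dring R" "e \<in> Dring R"
  then obtain k l where k: "diffop R k d" and l: "diffop R l e" using Dring_diffop by blast
  have "diffop R (max k l) d" "diffop R (max k l) e"
    using diffop_mono[OF _ k] diffop_mono[OF _ l] by auto
  hence "diffop R (max k l) (\<lambda>f. d f + e f)" by (rule diffop_add)
  thus ?thesis unfolding D_add_eq by (rule diffop_Dring)
qed

lemma D_mult_Dring: "d \<in> Dring R \<Longrightarrow> e \<in> Dring R \<Longrightarrow> D_mult R d e \<in> Dring R"
proof -
  assume "d \<in> Dring R" "e \<in> Dring R"
  then obtain k l where k: "diffop R k d" and l: "diffop R l e" using Dring_diffop by blast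
  have "diffop R (k + l) (\<lambda>f. d (e f))" by (rule diffop_comp[OF k l])
  thus ?thesis unfolding D_mult_eq by (rule diffop_Dring)
qed

lemma der_Dring: "restrict (der i) R \<in> Dring R"
  by (rule diffop_Dring[OF der_diffop])

end

locale dmod = serring R n for R :: "'a::comm_ring_1 series set" and n +
  fixes act :: "('a series \<Rightarrow> 'a series) \<Rightarrow> 'm::ab_group_add \<Rightarrow> 'm"
  assumes DM: "D_module R act"
begin

lemma act_add: "d \<in> Dring R \<Longrightarrow> act d (x + y) = act d x + act d y"
  using DM unfolding D_module_def by blast

lemma act_Dadd: "d \<in> Dring R \<Longrightarrow> e \<in> Dring R \<Longrightarrow> act (D_add R d e) x = act d x + act e x"
  using DM unfolding D_module_def by blast

lemma act_Dmult: "d \<in> Dring R \<Longrightarrow> e \<in> Dring R \<Longrightarrow> act (D_mult R d e) x = act d (act e x)"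
  using DM unfolding D_module_def by blast

lemma act_one: "act (D_one R) x = x"
  using DM unfolding D_module_def by blast

lemma act_0: "d \<in> Dring R \<Longrightarrow> act d 0 = 0"
  using act_add[of d 0 0] by simp

lemma act_m1: "act (mult_op R (s_const (-1))) x = - x"
proof -
  have Z: "D_add R (D_one R) (mult_op R (s_const (-1))) = D_add R (mult_op R 0) (mult_op R 0)"
    by (auto simp: D_add_eq D_one_def mult_op_eq s_mult_const cm_def fun_eq_iff intro!: restrict_ext)
  have one: "D_one R = mult_op R (s_const 1)"
    by (simp add: D_one_def mult_op_eq)
  have D1: "D_one R \<in> Dring R" unfolding one by (rule mult_op_Dring[OF const_in])
  have Dm: "mult_op R (s_const (-1)) \<in> Dring R" by (rule mult_op_Dring[OF const_in])
  have D0: "mult_op R 0 \<in> Dring R" by (rule mult_op_Dring[OF zero_in])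
  have "D_add R (mult_op R 0) (mult_op R 0) = mult_op R 0"
    by (auto simp: D_add_eq mult_op_eq intro!: restrict_ext)
  hence z: "act (mult_op R 0) y = 0" for y
    using act_Dadd[OF D0 D0, of y] by simp
  have "x + act (mult_op R (s_const (-1))) x = 0"
    using act_Dadd[OF D1 Dm, of x] act_one[of x] z Z act_Dadd[OF D0 D0] by simp
  thus ?thesis by (simp add: eq_neg_iff_add_eq_0 add.commute)
qed

definition II where "II = Ann_R R act"

lemma II_mem: "a \<in> II \<longleftrightarrow> a \<in> R \<and> (\<forall>x. act (mult_op R a) x = 0)"
  by (simp add: II_def Ann_R_def)

lemma II_0: "0 \<in> II"
proof -
  have D0: "mult_op R 0 \<in> Dring R" by (rule mult_op_Dring[OF zero_in])
  have "D_add R (mult_op R 0) (mult_op R 0) = mult_op R 0"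
    by (auto simp: D_add_eq mult_op_eq intro!: restrict_ext)
  hence "act (mult_op R 0) y = 0" for y
    using act_Dadd[OF D0 D0, of y] by simp
  thus ?thesis using zero_in by (simp add: II_mem)
qed

lemma II_add: "a \<in> II \<Longrightarrow> b \<in> II \<Longrightarrow> a + b \<in> II"
proof -
  assume a: "a \<in> II" and b: "b \<in> II"
  have aR: "a \<in> R" and bR: "b \<in> R" using a b by (auto simp: II_mem)
  have "mult_op R (a + b) = D_add R (mult_op R a) (mult_op R b)"
    by (auto simp: D_add_eq mult_op_eq s_mult_add_left intro!: restrict_ext)
  thus ?thesis using a b aR bR act_Dadd[OF mult_op_Dring[OF aR] mult_op_Dring[OF bR]]
    by (simp add: II_mem add_in)
qed

lemma II_mult: "r \<in> R \<Longrightarrow> a \<in> II \<Longrightarrow> s_mult r a \<in> II"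
proof -
  assume r: "r \<in> R" and a: "a \<in> II"
  have aR: "a \<in> R" using a by (auto simp: II_mem)
  have "mult_op R (s_mult r a) = D_mult R (mult_op R r) (mult_op R a)"
    by (auto simp: D_mult_eq mult_op_eq s_mult_assoc mult_in aR intro!: restrict_ext)
  thus ?thesis using a r aR act_Dmult[OF mult_op_Dring[OF r] mult_op_Dring[OF aR]]
      act_0[OF mult_op_Dring[OF r]]
    by (simp add: II_mem mult_in)
qed

lemma II_cm: "a \<in> II \<Longrightarrow> cm c a \<in> II"
  using II_mult[OF const_in] by (simp add: s_mult_const)

lemma II_der: "a \<in> II \<Longrightarrow> der i a \<in> II"
proof -
  assume a: "a \<in> II"
  have aR: "a \<in> R" using a by (auto simp: II_mem)
  let ?D = "restrict (der i) R"
  let ?A = "mult_op R a"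
  let ?M = "mult_op R (s_const (-1))"
  have DD: "?D \<in> Dring R" by (rule der_Dring)
  have DA: "?A \<in> Dring R" by (rule mult_op_Dring[OF aR])
  have DM1: "?M \<in> Dring R" by (rule mult_op_Dring[OF const_in])
  have eq: "mult_op R (der i a) = D_add R (D_mult R ?D ?A) (D_mult R ?M (D_mult R ?A ?D))"
  proof -
    have "s_mult (der i a) f = der i (s_mult a f) + s_mult (s_const (-1)) (s_mult a (der i f))"
      if "f \<in> R" for f
      by (simp add: der_leibniz s_mult_const cm_m1)
    thus ?thesis
      by (auto simp: D_add_eq D_mult_eq mult_op_eq mult_in aR der_in intro!: restrict_ext)
  qed
  have "act (mult_op R (der i a)) x = 0" for x
  proof -
    have "act (mult_op R (der i a)) x = act (D_mult R ?D ?A) x + act (D_mult R ?M (D_mult R ?A ?D)) x"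
      unfolding eq by (rule act_Dadd[OF D_mult_Dring[OF DD DA] D_mult_Dring[OF DM1 D_mult_Dring[OF DA DD]]])
    also have "\<dots> = act ?D (act ?A x) + act ?M (act ?A (act ?D x))"
      by (simp add: act_Dmult DD DA DM1 D_mult_Dring)
    also have "\<dots> = 0" using a by (simp add: II_mem act_0[OF DD] act_0[OF DM1])
    finally show ?thesis .
  qed
  thus ?thesis by (simp add: II_mem der_in aR)
qed

end


theorem lemma3p3:
  fixes pi :: "'a::{idom, ring_char_0}" and p n :: nat
    and R :: "'a series set"
    and act :: "('a series \<Rightarrow> 'a series) \<Rightarrow> 'm::ab_group_add \<Rightarrow> 'm"
  assumes "dvr_uniformizer pi"
    and "residue_char pi p"
    and "R = R_ps n \<or> R = R_poly n"
    and "D_module R act"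
  shows "D_submodule R (saturation R (Ann_R R act) pi)"
proof -
  interpret dmod R n act using assms(3,4) by unfold_locales auto
  define J where "J = saturation R II pi"
  have J_mem: "a \<in> J \<longleftrightarrow> a \<in> R \<and> (\<exists>m. cm (pi ^ m) a \<in> II)" for a
    by (simp add: J_def saturation_def s_mult_const_right)
  have JR: "J \<subseteq> R" using J_mem by blast
  have J0: "0 \<in> J" using J_mem[of 0] zero_in II_0 by (auto simp: cm_def intro!: exI[of _ 0])
  have Jadd: "a + b \<in> J" if ab: "a \<in> J" "b \<in> J" for a b
  proof -
    obtain m1 m2 where m: "cm (pi ^ m1) a \<in> II" "cm (pi ^ m2) b \<in> II" using ab J_mem by blast
    have "cm (pi ^ (m1 + m2)) (a + b) = cm (pi ^ m2) (cm (pi ^ m1) a) + cm (pi ^ m1) (cm (pi ^ m2) b)"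
      by (simp add: cm_def fun_eq_iff power_add algebra_simps)
    also have "\<dots> \<in> II" by (rule II_add[OF II_cm[OF m(1)] II_cm[OF m(2)]])
    finally show ?thesis using ab J_mem add_in by blast
  qed
  have Jmult: "s_mult r a \<in> J" if ra: "r \<in> R" "a \<in> J" for r a
  proof -
    obtain m where m: "cm (pi ^ m) a \<in> II" using ra J_mem by blast
    have "cm (pi ^ m) (s_mult r a) = s_mult r (cm (pi ^ m) a)" by (rule cm_s_mult2)
    also have "\<dots> \<in> II" using m ra by (intro II_mult)
    finally show ?thesis using ra J_mem mult_in by blast
  qed
  have Jder: "der i a \<in> J" if aJ: "a \<in> J" for i a
  proof -
    obtain m where m: "cm (pi ^ m) a \<in> II" using aJ J_mem by blast
    have "cm (pi ^ m) (der i a) = der i (cm (pi ^ m) a)" by (simp add: der_cm)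
    also have "\<dots> \<in> II" using m by (intro II_der)
    finally show ?thesis using aJ J_mem der_in by blast
  qed
  have Jsat: "b \<in> J" if k: "0 < k" and b: "b \<in> R" and kb: "cm (of_nat k) b \<in> J" for k b
  proof -
    have "(of_nat k :: 'a) \<noteq> 0" using k by simp
    then obtain u e where u: "u dvd 1" and ue: "(of_nat k :: 'a) = u * pi ^ e"
      using assms(1) unfolding dvr_uniformizer_def by blast
    obtain v where v: "1 = u * v" using u by (auto simp: dvd_def)
    obtain m where m: "cm (pi ^ m) (cm (of_nat k) b) \<in> II" using kb J_mem by blast
    have "cm v (cm (pi ^ m) (cm (of_nat k) b)) = cm (pi ^ (m + e)) b"
      unfolding ue cm_cm
      by (simp add: power_add) (metis (no_types, lifting) mult.assoc mult.commute mult.left_commute mult_1 v)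
    moreover have "cm v (cm (pi ^ m) (cm (of_nat k) b)) \<in> II" using m by (rule II_cm)
    ultimately show ?thesis using b J_mem by metis
  qed
  have main: "d a \<in> J" if "diffop R k d" "a \<in> J" for k d a
  proof -
    have Jder': "der i a \<in> J" if "i < n" "a \<in> J" for i a using Jder that(2) .
    show ?thesis by (rule main_op[OF JR J0 Jadd Jmult Jder' Jsat that])
  qed
  have c0: "s_const (0::'a) = 0" by (simp add: s_const_def fun_eq_iff)
  have s1: "s_const 0 \<in> J" unfolding c0 by (rule J0)
  have s2: "\<forall>a\<in>J. \<forall>b\<in>J. s_add a b \<in> J" unfolding s_add_eq using Jadd by blast
  have s3: "\<forall>a\<in>J. (\<lambda>m. - a m) \<in> J"
  proof
    fix a assume a: "a \<in> J"
    have "(\<lambda>m. - a m) = s_mult (s_const (-1)) a" by (simp add: s_mult_const cm_def)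
    thus "(\<lambda>m. - a m) \<in> J" using Jmult[OF const_in a] by simp
  qed
  have s4: "\<forall>d\<in>Dring R. \<forall>a\<in>J. d a \<in> J"
  proof (intro ballI)
    fix d a assume d: "d \<in> Dring R" and a: "a \<in> J"
    obtain k where "diffop R k d" using Dring_diffop[OF d] by blast
    thus "d a \<in> J" using main a by blast
  qed
  have "D_submodule R J" unfolding D_submodule_def using JR s1 s2 s3 s4 by blast
  thus ?thesis by (simp add: J_def II_def)
qed

end
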